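(* Let $A,B\in\mathcal{B}(\mathcal{H})$ and let $B=X+iY$ be the Cartesian decomposition of $B$. Then: (i) if $XY+YX=0$, then $w(AB\pm BA^* )\leq 2\|A\|\max\{w^{1/2}(X^2),w^{1/2}(Y^2)\}$; (ii) if $B$ is self-adjoint, then $w(AB\pm BA^* )\leq 2\|A\|\,w^{1/2}(X^2)$; (iii) if $B$ is self-adjoint, then $w(AB)\leq\|A\|\,w^{1/2}(X^2)$.
   Context: $\mathcal{H}$ is a complex Hilbert space, $\mathcal{B}(\mathcal{H})$ the bounded linear operators on it, $w$ the numerical radius, $\|\cdot\|$ the operator norm. The Cartesian decomposition $B=X+iY$ means $X=\frac{B+B^*}{2}$, $Y=\frac{B-B^*}{2i}$ (both self-adjoint). *)

theory Defs
  imports "HOL-Analysis.Analysis"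
begin

class complex_vector = real_vector +
  fixes scaleC :: "complex \<Rightarrow> 'a \<Rightarrow> 'a" (infixr \<open>*\<^sub>C\<close> 75)
  assumes scaleC_add_right: "a *\<^sub>C (x + y) = a *\<^sub>C x + a *\<^sub>C y"
    and scaleC_add_left: "(a + b) *\<^sub>C x = a *\<^sub>C x + b *\<^sub>C x"
    and scaleC_scaleC: "a *\<^sub>C (b *\<^sub>C x) = (a * b) *\<^sub>C x"
    and scaleC_one: "1 *\<^sub>C x = x"
    and scaleR_scaleC: "scaleR r x = complex_of_real r *\<^sub>C x"

class complex_inner = complex_vector + real_normed_vector +
  fixes cinner :: "'a \<Rightarrow> 'a \<Rightarrow> complex"
  assumes cinner_commute: "cinner x y = cnj (cinner y x)"
    and cinner_add_left: "cinner (x + y) z = cinner x z + cinner y z"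
    and cinner_scaleC_left: "cinner (a *\<^sub>C x) y = a * cinner x y"
    and cinner_real: "Im (cinner x x) = 0"
    and cinner_ge_zero: "0 \<le> Re (cinner x x)"
    and cinner_eq_zero_iff: "cinner x x = 0 \<longleftrightarrow> x = 0"
    and norm_eq_sqrt_cinner: "norm x = sqrt (Re (cinner x x))"

class chilbert_space = complex_inner + complete_space

definition clinear :: "('a::complex_vector \<Rightarrow> 'b::complex_vector) \<Rightarrow> bool" where
  "clinear f \<longleftrightarrow> (\<forall>x y. f (x + y) = f x + f y) \<and> (\<forall>c x. f (c *\<^sub>C x) = c *\<^sub>C f x)"

definition bounded_clinear :: "('a::complex_inner \<Rightarrow> 'b::complex_inner) \<Rightarrow> bool" where
  "bounded_clinear f \<longleftrightarrow> clinear f \<and> (\<exists>K. \<forall>x. norm (f x) \<le> norm x * K)"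

definition is_adjoint :: "('a::complex_inner \<Rightarrow> 'a) \<Rightarrow> ('a \<Rightarrow> 'a) \<Rightarrow> bool" where
  "is_adjoint T S \<longleftrightarrow> (\<forall>x y. cinner (T x) y = cinner x (S y))"

text \<open>The Hilbert space adjoint T* (it exists and is unique for bounded T).\<close>
definition adj :: "('a::complex_inner \<Rightarrow> 'a) \<Rightarrow> ('a \<Rightarrow> 'a)" where
  "adj T = (THE S. is_adjoint T S)"

text \<open>Numerical radius w(T) = sup{|<Tx,x>| : ||x|| = 1}; the extra 0 only
  matters for the trivial space (where w(T) = 0).\<close>
definition numrad :: "('a::complex_inner \<Rightarrow> 'a) \<Rightarrow> real" where
  "numrad T = Sup (insert 0 {cmod (cinner (T x) x) | x. norm x = 1})"

end

theory Submission
  imports Defs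
begin

lemma scaleC_zero_right[simp]: "a *\<^sub>C (0::'a::complex_vector) = 0"
  using scaleC_add_right[of a "0::'a" 0] by simp

lemma scaleC_zero_left[simp]: "0 *\<^sub>C (x::'a::complex_vector) = 0"
  using scaleR_scaleC[of 0 x] by simp

lemma scaleC_minus_right: "a *\<^sub>C (- x) = - (a *\<^sub>C (x::'a::complex_vector))"
  using scaleC_add_right[of a x "-x"] by (simp add: add_eq_0_iff)

lemma scaleC_diff_right: "a *\<^sub>C (x - y) = a *\<^sub>C x - a *\<^sub>C (y::'a::complex_vector)"
  using scaleC_add_right[of a x "-y"] scaleC_minus_right[of a y] by simp

lemma scaleC_minus1: "(-1) *\<^sub>C x = - (x::'a::complex_vector)"
  using scaleR_scaleC[of "-1" x] by simp

lemma cinner_add_right: "cinner x (y + z) = cinner x y + cinner (x::'a::complex_inner) z"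
  by (metis cinner_add_left cinner_commute complex_cnj_add)

lemma cinner_scaleC_right: "cinner x (a *\<^sub>C y) = cnj a * cinner x (y::'a::complex_inner)"
  by (metis cinner_commute cinner_scaleC_left complex_cnj_mult)

lemma cinner_zero_left[simp]: "cinner 0 (y::'a::complex_inner) = 0"
  using cinner_add_left[of "0::'a" 0 y] by simp

lemma cinner_zero_right[simp]: "cinner x (0::'a::complex_inner) = 0"
  using cinner_add_right[of x "0::'a" 0] by simp

lemma cinner_minus_left: "cinner (- x) y = - cinner x (y::'a::complex_inner)"
  using cinner_add_left[of x "-x" y] by (simp add: add_eq_0_iff)

lemma cinner_minus_right: "cinner x (- y) = - cinner x (y::'a::complex_inner)"
  using cinner_add_right[of x y "-y"] by (simp add: add_eq_0_iff)

lemma cinner_diff_left: "cinner (x - y) z = cinner x z - cinner y (z::'a::complex_inner)"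
  using cinner_add_left[of x "-y" z] cinner_minus_left[of y z] by simp

lemma cinner_diff_right: "cinner x (y - z) = cinner x y - cinner x (z::'a::complex_inner)"
  using cinner_add_right[of x y "-z"] cinner_minus_right[of x z] by simp

lemma cinner_scaleR_left: "cinner (r *\<^sub>R x) y = of_real r * cinner x (y::'a::complex_inner)"
  by (simp add: scaleR_scaleC cinner_scaleC_left)

lemma cinner_scaleR_right: "cinner x (r *\<^sub>R y) = of_real r * cinner x (y::'a::complex_inner)"
  by (simp add: scaleR_scaleC cinner_scaleC_right)

lemma cinner_self: "cinner x x = complex_of_real ((norm (x::'a::complex_inner))\<^sup>2)"
proof -
  have "(norm x)\<^sup>2 = Re (cinner x x)" using norm_eq_sqrt_cinner[of x] cinner_ge_zero[of x] by simp
  then show ?thesis using cinner_real[of x] by (simp add: complex_eqI)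
qed

lemma norm_sq_Re: "(norm (x::'a::complex_inner))\<^sup>2 = Re (cinner x x)"
  by (simp add: cinner_self)

lemma norm_scaleC: "norm (a *\<^sub>C (x::'a::complex_inner)) = cmod a * norm x"
proof -
  have "(norm (a *\<^sub>C x))\<^sup>2 = Re (a * cnj a * cinner x x)"
    apply (simp add: norm_sq_Re cinner_scaleC_left cinner_scaleC_right mult.assoc)
    apply (simp add: algebra_simps)
    done
  also have "\<dots> = (cmod a * norm x)\<^sup>2"
    by (metis Re_complex_of_real cinner_self complex_norm_square of_real_mult power_mult_distrib)
  finally show ?thesis
    by (metis norm_ge_zero power2_eq_imp_eq zero_le_mult_iff)
qed

lemma norm_expand: "(norm (x + a *\<^sub>C y))\<^sup>2 =
   (norm x)\<^sup>2 + 2 * Re (cnj a * cinner x y) + (cmod a)\<^sup>2 * (norm (y::'a::complex_inner))\<^sup>2"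
proof -
  have "cinner (x + a *\<^sub>C y) (x + a *\<^sub>C y) =
     cinner x x + cnj a * cinner x y + a * cinner y x + a * cnj a * cinner y y"
    by (simp add: cinner_add_left cinner_add_right cinner_scaleC_left cinner_scaleC_right algebra_simps)
  moreover have "a * cinner y x = cnj (cnj a * cinner x y)"
    by (metis cinner_commute complex_cnj_cnj complex_cnj_mult)
  ultimately have "(norm (x + a *\<^sub>C y))\<^sup>2 = Re (cinner x x) + 2 * Re (cnj a * cinner x y) + Re (a * cnj a * cinner y y)"
    by (simp add: norm_sq_Re)
  also have "Re (a * cnj a * cinner y y) = (cmod a)\<^sup>2 * (norm y)\<^sup>2"
    by (metis Re_complex_of_real cinner_self complex_norm_square of_real_mult)
  finally show ?thesis by (simp add: norm_sq_Re)
qed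

lemma norm_proj:
  assumes "y \<noteq> 0"
  shows "(norm (x + (- cinner x y / of_real ((norm y)\<^sup>2)) *\<^sub>C y))\<^sup>2 =
         (norm x)\<^sup>2 - (cmod (cinner x (y::'a::complex_inner)))\<^sup>2 / (norm y)\<^sup>2"
proof -
  define c where "c = cinner x y"
  define n where "n = (norm y)\<^sup>2"
  have n: "n > 0" using assms by (simp add: n_def)
  have 1: "Re (cnj (- c / of_real n) * c) = - (cmod c)\<^sup>2 / n"
  proof -
    have cc: "c * cnj c = of_real ((cmod c)\<^sup>2)" using complex_norm_square[of c] by simp
    have "cnj (- c / of_real n) * c = - of_real ((cmod c)\<^sup>2 / n)"
    proof -
      have "cnj (- c / of_real n) * c = - (c * cnj c) / of_real n" by (simp add: mult.commute)
      also have "\<dots> = - of_real ((cmod c)\<^sup>2 / n)" unfolding cc by simp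
      finally show ?thesis .
    qed
    then show ?thesis by (metis Re_complex_of_real of_real_minus minus_divide_left)
  qed
  have 2: "(cmod (- c / of_real n))\<^sup>2 * n = (cmod c)\<^sup>2 / n"
    using n by (simp add: norm_divide power2_eq_square)
  have e: "(norm (x + (- c / of_real n) *\<^sub>C y))\<^sup>2 = (norm x)\<^sup>2 + 2 * Re (cnj (- c / of_real n) * c) + (cmod (- c / of_real n))\<^sup>2 * n"
    unfolding norm_expand c_def n_def ..
  show ?thesis using e 1 2 by (simp only: c_def[symmetric] n_def[symmetric])
qed

lemma cauchy_schwarz: "cmod (cinner x y) \<le> norm x * norm (y::'a::complex_inner)"
proof (cases "y = 0")
  case True then show ?thesis by simp
next
  case False
  have "0 \<le> (norm x)\<^sup>2 - (cmod (cinner x y))\<^sup>2 / (norm y)\<^sup>2"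
    using norm_proj[OF False, of x] by (metis zero_le_power2)
  then have "(cmod (cinner x y))\<^sup>2 \<le> (norm x * norm y)\<^sup>2"
    using False by (simp add: field_simps power_mult_distrib)
  then show ?thesis by (meson abs_le_square_iff abs_norm_cancel le_trans abs_ge_self power2_le_imp_le mult_nonneg_nonneg norm_ge_zero)
qed

lemma variational:
  assumes "\<And>c. norm x \<le> norm (x + c *\<^sub>C y)"
  shows "cinner x (y::'a::complex_inner) = 0"
proof (cases "y = 0")
  case True then show ?thesis by simp
next
  case False
  have "(norm x)\<^sup>2 \<le> (norm x)\<^sup>2 - (cmod (cinner x y))\<^sup>2 / (norm y)\<^sup>2"
    using norm_proj[OF False, of x] assms[of "- cinner x y / of_real ((norm y)\<^sup>2)"]
    by (metis norm_ge_zero power_mono)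
  then have "(cmod (cinner x y))\<^sup>2 / (norm y)\<^sup>2 \<le> 0" by simp
  then have "(cmod (cinner x y))\<^sup>2 \<le> 0" using False
    by (simp add: divide_le_0_iff)
  then show ?thesis by simp
qed

lemma parallelogram: "(norm (u - v))\<^sup>2 + (norm (u + v))\<^sup>2 = 2 * (norm u)\<^sup>2 + 2 * (norm (v::'a::complex_inner))\<^sup>2"
proof -
  have a: "u + v = u + 1 *\<^sub>C v" by (simp add: scaleC_one)
  have b: "u - v = u + (-1) *\<^sub>C v" by (simp add: scaleC_minus1)
  show ?thesis unfolding a b norm_expand by simp
qed


lemma riesz:
  fixes f :: "'a::chilbert_space \<Rightarrow> complex"
  assumes add: "\<And>x y. f (x + y) = f x + f y"
    and sc: "\<And>c x. f (c *\<^sub>C x) = c * f x"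
    and bd: "\<And>x. cmod (f x) \<le> norm x * K"
  shows "\<exists>z. \<forall>x. f x = cinner x z"
proof (cases "\<forall>x. f x = 0")
  case True then show ?thesis by (intro exI[of _ 0]) simp
next
  case False
  then obtain x0 where x0: "f x0 \<noteq> 0" by blast
  have f0: "f 0 = 0" using add[of 0 0] by simp
  have fdiff: "f (x - y) = f x - f y" for x y using add[of "x - y" y] by simp
  have fR: "f (r *\<^sub>R x) = of_real r * f x" for r x by (simp add: scaleR_scaleC sc)
  have blf: "bounded_linear f"
    by (rule bounded_linear_intro[where K=K]) (auto simp: add fR scaleR_conv_of_real bd)
  define S where "S = {u. f u = 1}"
  have x1: "inverse (f x0) *\<^sub>C x0 \<in> S" using x0 by (simp add: S_def sc)
  define d where "d = Inf (norm ` S)"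
  have Sne: "norm ` S \<noteq> {}" using x1 by blast
  have d_le: "d \<le> norm u" if "u \<in> S" for u
    unfolding d_def by (rule cInf_lower) (use that in \<open>auto intro: bdd_belowI[of _ 0]\<close>)
  have d0: "0 \<le> d" unfolding d_def by (rule cInf_greatest[OF Sne]) auto
  have "\<exists>u. u \<in> S \<and> norm u < d + inverse (real (Suc n))" for n
  proof -
    have "Inf (norm ` S) < d + inverse (real (Suc n))" unfolding d_def by simp
    from cInf_lessD[OF Sne this] show ?thesis by blast
  qed
  then obtain u where uS: "\<And>n. u n \<in> S" and un: "\<And>n. norm (u n) < d + inverse (real (Suc n))"
    by metis
  have mid: "(1/2) *\<^sub>R (v + w) \<in> S" if "v \<in> S" "w \<in> S" for v w
    using that by (simp add: S_def fR add)
  have dist_bd: "(norm (u n - u m))\<^sup>2 \<le> (8 * d + 4) * inverse (real (Suc N))"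
    if "n \<ge> N" "m \<ge> N" for n m N
  proof -
    define a where "a = inverse (real (Suc n))"
    define b where "b = inverse (real (Suc m))"
    define e where "e = inverse (real (Suc N))"
    have a: "0 \<le> a" "a \<le> e" "e \<le> 1" using that by (auto simp: a_def e_def field_simps)
    have b: "0 \<le> b" "b \<le> e" using that by (auto simp: b_def e_def field_simps)
    have "2 * d \<le> norm (u n + u m)"
      using d_le[OF mid[OF uS[of n] uS[of m]]] by simp
    then have s: "4 * d\<^sup>2 \<le> (norm (u n + u m))\<^sup>2"
      using d0 by (metis mult_2_right power2_eq_square power_mono zero_le_mult_iff zero_less_numeral less_imp_le
          four_x_squared)
    have n1: "(norm (u n))\<^sup>2 \<le> (d + a)\<^sup>2"
      using un[of n] by (simp add: a_def power_mono less_imp_le)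
    have n2: "(norm (u m))\<^sup>2 \<le> (d + b)\<^sup>2"
      using un[of m] by (simp add: b_def power_mono less_imp_le)
    have "(norm (u n - u m))\<^sup>2 \<le> 2 * (d + a)\<^sup>2 + 2 * (d + b)\<^sup>2 - 4 * d\<^sup>2"
      using parallelogram[of "u n" "u m"] s n1 n2 by linarith
    also have "\<dots> = 4 * d * a + 2 * a * a + 4 * d * b + 2 * b * b"
      by (simp add: power2_eq_square algebra_simps)
    also have "\<dots> \<le> 4 * d * e + 2 * e + 4 * d * e + 2 * e"
    proof -
      have "a * a \<le> e" using a mult_left_le[of a a] by linarith
      moreover have "b * b \<le> e" using a b mult_left_le[of b b] by linarith
      ultimately show ?thesis
      using a b d0 by (intro add_mono mult_left_mono) auto
    qed
    finally show ?thesis by (simp add: e_def algebra_simps)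
  qed
  have "Cauchy u"
  proof (rule metric_CauchyI)
    fix eps :: real assume eps: "0 < eps"
    obtain N :: nat where N: "(8 * d + 4) / eps\<^sup>2 < real N" using reals_Archimedean2 by blast
    have "(8 * d + 4) * inverse (real (Suc N)) < eps\<^sup>2"
      using N eps d0 by (simp add: field_simps) (smt (verit) zero_less_power)
    then have "dist (u m) (u n) < eps" if "m \<ge> N" "n \<ge> N" for m n
      using dist_bd[OF that] eps
      by (metis dist_norm le_less_trans norm_ge_zero power2_less_imp_less less_imp_le)
    then show "\<exists>M. \<forall>m\<ge>M. \<forall>n\<ge>M. dist (u m) (u n) < eps" by blast
  qed
  then obtain z where uz: "u \<longlonglongrightarrow> z" using Cauchy_convergent_iff convergent_def by blast
  have "(\<lambda>n. f (u n)) \<longlonglongrightarrow> f z" using bounded_linear.tendsto[OF blf uz] .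
  moreover have "(\<lambda>n. f (u n)) = (\<lambda>n. 1)" using uS by (simp add: S_def)
  ultimately have fz: "f z = 1" using LIMSEQ_unique tendsto_const by metis
  have "norm z \<le> d"
  proof (rule tendsto_le[OF sequentially_bot])
    show "(\<lambda>n. d + inverse (real (Suc n))) \<longlonglongrightarrow> d"
      using tendsto_add[OF tendsto_const LIMSEQ_inverse_real_of_nat, of d] by simp
    show "(\<lambda>n. norm (u n)) \<longlonglongrightarrow> norm z" using tendsto_norm[OF uz] .
    show "\<forall>\<^sub>F n in sequentially. norm (u n) \<le> d + inverse (real (Suc n))"
      using un by (simp add: less_imp_le)
  qed
  then have zmin: "norm z \<le> norm v" if "v \<in> S" for v using d_le[OF that] by linarith
  have orth: "cinner z h = 0" if "f h = 0" for h
  proof (rule variational)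
    fix c
    show "norm z \<le> norm (z + c *\<^sub>C h)"
      by (rule zmin) (simp add: S_def add sc fz that)
  qed
  have z0: "z \<noteq> 0" using fz f0 by auto
  define w where "w = inverse ((norm z)\<^sup>2) *\<^sub>R z"
  show ?thesis
  proof (intro exI allI)
    fix x
    have "f (x - f x *\<^sub>C z) = 0" by (simp add: fdiff sc fz)
    then have "cinner z (x - f x *\<^sub>C z) = 0" by (rule orth)
    then have "cinner (x - f x *\<^sub>C z) z = 0" by (metis cinner_commute complex_cnj_zero)
    then have "cinner x z = f x * of_real ((norm z)\<^sup>2)"
      by (simp add: cinner_diff_left cinner_scaleC_left cinner_self)
    then show "f x = cinner x w"
      using z0 by (simp add: w_def cinner_scaleR_right field_simps)
  qed
qed


lemma bcl_blin: "bounded_clinear T \<Longrightarrow> bounded_linear T"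
  unfolding bounded_clinear_def clinear_def
  by (auto intro!: bounded_linear_intro simp: scaleR_scaleC)

lemma adj_unique:
  assumes "is_adjoint T S" "is_adjoint T S'"
  shows "S = S'"
proof
  fix y
  have "cinner (S y - S' y) (S y - S' y) = 0"
    using assms unfolding is_adjoint_def by (metis cinner_diff_right right_minus_eq)
  then show "S y = S' y" by (simp add: cinner_eq_zero_iff)
qed

lemma adj_is:
  fixes T :: "'a::chilbert_space \<Rightarrow> 'a"
  assumes "bounded_clinear T"
  shows "is_adjoint T (adj T)"
proof -
  obtain K where K: "\<And>x. norm (T x) \<le> norm x * K" and lin: "clinear T"
    using assms unfolding bounded_clinear_def by blast
  have "\<exists>z. \<forall>x. cinner (T x) y = cinner x z" for y
  proof (rule riesz[where K="K * norm y"])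
    show "cinner (T (x + x')) y = cinner (T x) y + cinner (T x') y" for x x'
      using lin by (simp add: clinear_def cinner_add_left)
    show "cinner (T (c *\<^sub>C x)) y = c * cinner (T x) y" for c x
      using lin by (simp add: clinear_def cinner_scaleC_left)
    show "cmod (cinner (T x) y) \<le> norm x * (K * norm y)" for x
      using cauchy_schwarz[of "T x" y] K[of x]
      by (metis mult.assoc mult_right_mono norm_ge_zero order_trans)
  qed
  then obtain S where S: "\<And>y x. cinner (T x) y = cinner x (S y)" by metis
  then have "is_adjoint T S" by (simp add: is_adjoint_def)
  moreover then have "adj T = S" unfolding adj_def by (metis adj_unique the_equality)
  ultimately show ?thesis by simp
qed

lemma adj_bound:
  fixes T :: "'a::complex_inner \<Rightarrow> 'a"
  assumes "bounded_linear T" "is_adjoint T S"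
  shows "norm (S x) \<le> onorm T * norm x"
proof (cases "S x = 0")
  case True then show ?thesis using onorm_pos_le[OF assms(1)] by simp
next
  case False
  have "(norm (S x))\<^sup>2 = Re (cinner (T (S x)) x)"
    using assms(2) by (simp add: is_adjoint_def norm_sq_Re)
  also have "\<dots> \<le> cmod (cinner (T (S x)) x)" by (rule complex_Re_le_cmod)
  also have "\<dots> \<le> norm (T (S x)) * norm x" by (rule cauchy_schwarz)
  also have "\<dots> \<le> onorm T * norm (S x) * norm x"
    by (intro mult_right_mono onorm[OF assms(1)]) simp
  finally have "norm (S x) * norm (S x) \<le> norm (S x) * (onorm T * norm x)"
    by (simp add: power2_eq_square algebra_simps)
  then show ?thesis using False by simp
qed

lemma numrad_le:
  assumes "0 \<le> c" "\<And>x. norm x = 1 \<Longrightarrow> cmod (cinner (T x) x) \<le> c"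
  shows "numrad T \<le> c"
  unfolding numrad_def using assms by (intro cSup_least) auto

lemma numrad_ge:
  assumes "\<And>x. norm (T x) \<le> norm x * K" "norm x = 1"
  shows "cmod (cinner (T x) x) \<le> numrad T"
  unfolding numrad_def
proof (rule cSup_upper)
  show "cmod (cinner (T x) x) \<in> insert 0 {cmod (cinner (T x) x) |x. norm x = 1}" using assms by auto
  have "cmod (cinner (T y) y) \<le> max 0 K" if "norm y = 1" for y
    using cauchy_schwarz[of "T y" y] assms(1)[of y] that by simp
  then show "bdd_above (insert 0 {cmod (cinner (T x) x) |x. norm x = 1})"
    by (auto intro!: bdd_aboveI[of _ "max 0 K"])
qed

lemma numrad_bdd:
  assumes "\<And>x. norm (T x) \<le> norm x * K"
  shows "bdd_above (insert 0 {cmod (cinner (T x) x) |x. norm x = 1})"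
proof -
  have "cmod (cinner (T y) y) \<le> max 0 K" if "norm y = 1" for y
    using cauchy_schwarz[of "T y" y] assms[of y] that by simp
  then show ?thesis by (auto intro!: bdd_aboveI[of _ "max 0 K"])
qed

lemma numrad_nonneg:
  assumes "\<And>x. norm (T x) \<le> norm x * K"
  shows "0 \<le> numrad T"
  unfolding numrad_def by (rule cSup_upper[OF _ numrad_bdd[OF assms]]) simp

lemma cmod_re_im: "cmod (of_real s + \<i> * of_real t) = sqrt (s\<^sup>2 + t\<^sup>2)"
  by (simp add: cmod_def)

lemma key:
  fixes u v y :: "'a::complex_inner"
  assumes "Re (cinner u v) = 0" "(norm u)\<^sup>2 \<le> M" "(norm v)\<^sup>2 \<le> M"
  shows "(Re (cinner u y))\<^sup>2 + (Re (cinner v y))\<^sup>2 \<le> M * (norm y)\<^sup>2"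
proof -
  define p where "p = Re (cinner u y)"
  define r where "r = Re (cinner v y)"
  define s where "s = p\<^sup>2 + r\<^sup>2"
  have M0: "0 \<le> M" using assms(2) by (meson order_trans zero_le_power2)
  have "s = Re (cinner (p *\<^sub>R u + r *\<^sub>R v) y)"
    by (simp add: s_def p_def r_def cinner_add_left cinner_scaleR_left power2_eq_square)
  also have "\<dots> \<le> norm (p *\<^sub>R u + r *\<^sub>R v) * norm y"
    using complex_Re_le_cmod cauchy_schwarz order_trans by blast
  finally have s1: "s \<le> norm (p *\<^sub>R u + r *\<^sub>R v) * norm y" .
  have "(norm (p *\<^sub>R u + r *\<^sub>R v))\<^sup>2 = p\<^sup>2 * (norm u)\<^sup>2 + r\<^sup>2 * (norm v)\<^sup>2 + 2 * p * r * Re (cinner u v)"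
  proof -
    have e: "cinner (p *\<^sub>R u + r *\<^sub>R v) (p *\<^sub>R u + r *\<^sub>R v) = of_real (p\<^sup>2) * cinner u u
       + of_real (r\<^sup>2) * cinner v v + of_real (p * r) * (cinner u v + cinner v u)"
      by (simp add: cinner_add_left cinner_add_right cinner_scaleR_left cinner_scaleR_right
        power2_eq_square algebra_simps)
    have "Re (cinner v u) = Re (cinner u v)" by (subst cinner_commute) simp
    then show ?thesis unfolding norm_sq_Re[of "p *\<^sub>R u + r *\<^sub>R v"] e
      by (simp add: norm_sq_Re algebra_simps)
  qed
  also have "\<dots> \<le> p\<^sup>2 * M + r\<^sup>2 * M" using assms by (simp add: add_mono mult_left_mono)
  finally have s2: "(norm (p *\<^sub>R u + r *\<^sub>R v))\<^sup>2 \<le> s * M" by (simp add: s_def algebra_simps)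
  have s0: "0 \<le> s" by (simp add: s_def)
  have "s\<^sup>2 \<le> (norm (p *\<^sub>R u + r *\<^sub>R v) * norm y)\<^sup>2" using s1 s0 by (simp add: power_mono)
  also have "\<dots> \<le> s * M * (norm y)\<^sup>2" using s2 by (simp add: power_mult_distrib mult_right_mono)
  finally have "s * s \<le> s * (M * (norm y)\<^sup>2)" by (simp add: power2_eq_square algebra_simps)
  then have "s \<le> M * (norm y)\<^sup>2" using s0 M0
    by (cases "s = 0") (auto simp: mult_le_cancel_left)
  then show ?thesis by (simp add: s_def p_def r_def)
qed


lemma sqrt4: "sqrt (4 * a + 4 * b) = 2 * sqrt (a + b)"
proof -
  have "4 * a + 4 * b = 2\<^sup>2 * (a + b)" by simp
  then show ?thesis by (simp only: real_sqrt_mult real_sqrt_abs)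
qed

theorem corollary2p14:
  fixes A B :: "'a::chilbert_space \<Rightarrow> 'a"
  assumes "bounded_clinear A" and "bounded_clinear B"
  defines "X \<equiv> (\<lambda>x. (1/2) *\<^sub>C (B x + adj B x))"
      and "Y \<equiv> (\<lambda>x. inverse (2 * \<i>) *\<^sub>C (B x - adj B x))"
  shows "((\<forall>x. X (Y x) + Y (X x) = 0) \<longrightarrow>
            numrad (\<lambda>x. A (B x) + B (adj A x))
              \<le> 2 * onorm A * max (sqrt (numrad (X \<circ> X))) (sqrt (numrad (Y \<circ> Y)))
          \<and> numrad (\<lambda>x. A (B x) - B (adj A x))
              \<le> 2 * onorm A * max (sqrt (numrad (X \<circ> X))) (sqrt (numrad (Y \<circ> Y))))
       \<and> (adj B = B \<longrightarrow>
            numrad (\<lambda>x. A (B x) + B (adj A x)) \<le> 2 * onorm A * sqrt (numrad (X \<circ> X))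
          \<and> numrad (\<lambda>x. A (B x) - B (adj A x)) \<le> 2 * onorm A * sqrt (numrad (X \<circ> X)))
       \<and> (adj B = B \<longrightarrow> numrad (A \<circ> B) \<le> onorm A * sqrt (numrad (X \<circ> X)))"
proof -
  have bA: "bounded_linear A" and bB: "bounded_linear B" using assms(1,2) by (auto intro: bcl_blin)
  have aA: "is_adjoint A (adj A)" and aB: "is_adjoint B (adj B)" using assms(1,2) by (auto intro: adj_is)
  have A'bd: "norm (adj A x) \<le> onorm A * norm x" for x by (rule adj_bound[OF bA aA])
  have B'bd: "norm (adj B x) \<le> onorm B * norm x" for x by (rule adj_bound[OF bB aB])
  have Bbd: "norm (B x) \<le> onorm B * norm x" for x by (rule onorm[OF bB])
  have oA: "0 \<le> onorm A" by (rule onorm_pos_le[OF bA])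
  have aBu: "cinner (B u) v = cinner u (adj B v)" for u v using aB by (simp add: is_adjoint_def)
  have aBu': "cinner (adj B u) v = cinner u (B v)" for u v
    by (metis aBu cinner_commute)
  have Xs: "cinner (X u) v = cinner u (X v)" for u v
    by (simp add: X_def cinner_scaleC_left cinner_scaleC_right cinner_add_left cinner_add_right aBu aBu' algebra_simps)
  have Ys: "cinner (Y u) v = cinner u (Y v)" for u v
  proof -
    have c: "cnj (inverse (2 * \<i>)) = - inverse (2 * \<i>)" by (simp add: complex_eq_iff)
    show ?thesis
      by (simp add: Y_def cinner_scaleC_left cinner_scaleC_right cinner_diff_left cinner_diff_right aBu aBu' c algebra_simps)
  qed
  have BXY: "B x = X x + \<i> *\<^sub>C Y x" for x
  proof -
    have "X x + \<i> *\<^sub>C Y x = (1/2) *\<^sub>C (B x + adj B x) + (1/2) *\<^sub>C (B x - adj B x)"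
      by (simp add: X_def Y_def scaleC_scaleC)
    also have "\<dots> = (1/2) *\<^sub>C B x + (1/2) *\<^sub>C B x"
      by (simp add: scaleC_add_right scaleC_diff_right)
    also have "\<dots> = ((1/2) + (1/2)) *\<^sub>C B x" by (simp only: scaleC_add_left)
    finally show ?thesis by (simp add: scaleC_one)
  qed
  have B'XY: "adj B x = X x - \<i> *\<^sub>C Y x" for x
  proof -
    have "X x - \<i> *\<^sub>C Y x = (1/2) *\<^sub>C (B x + adj B x) - (1/2) *\<^sub>C (B x - adj B x)"
      by (simp add: X_def Y_def scaleC_scaleC)
    also have "\<dots> = (1/2) *\<^sub>C adj B x + (1/2) *\<^sub>C adj B x"
      by (simp add: scaleC_add_right scaleC_diff_right)
    also have "\<dots> = ((1/2) + (1/2)) *\<^sub>C adj B x" by (simp only: scaleC_add_left)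
    finally show ?thesis by (simp add: scaleC_one)
  qed
  have Xbd: "norm (X x) \<le> norm x * onorm B" for x
  proof -
    have "norm (X x) = (1/2) * norm (B x + adj B x)" by (simp add: X_def norm_scaleC)
    also have "\<dots> \<le> (1/2) * (norm (B x) + norm (adj B x))" by (simp add: norm_triangle_ineq)
    also have "\<dots> \<le> norm x * onorm B" using Bbd[of x] B'bd[of x] by (simp add: algebra_simps)
    finally show ?thesis .
  qed
  have Ybd: "norm (Y x) \<le> norm x * onorm B" for x
  proof -
    have "norm (Y x) = (1/2) * norm (B x - adj B x)" by (simp add: Y_def norm_scaleC norm_mult)
    also have "\<dots> \<le> (1/2) * (norm (B x) + norm (adj B x))" by (simp add: norm_triangle_ineq4)
    also have "\<dots> \<le> norm x * onorm B" using Bbd[of x] B'bd[of x] by (simp add: algebra_simps)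
    finally show ?thesis .
  qed
  have XXbd: "norm ((X \<circ> X) x) \<le> norm x * (onorm B * onorm B)" for x
  proof -
    have "norm (X (X x)) \<le> norm (X x) * onorm B" by (rule Xbd)
    also have "\<dots> \<le> (norm x * onorm B) * onorm B" by (rule mult_right_mono[OF Xbd onorm_pos_le[OF bB]])
    finally show ?thesis by (simp add: mult.assoc)
  qed
  have YYbd: "norm ((Y \<circ> Y) x) \<le> norm x * (onorm B * onorm B)" for x
  proof -
    have "norm (Y (Y x)) \<le> norm (Y x) * onorm B" by (rule Ybd)
    also have "\<dots> \<le> (norm x * onorm B) * onorm B" by (rule mult_right_mono[OF Ybd onorm_pos_le[OF bB]])
    finally show ?thesis by (simp add: mult.assoc)
  qed
  define n1 where "n1 = numrad (X \<circ> X)"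
  define n2 where "n2 = numrad (Y \<circ> Y)"
  have n1: "0 \<le> n1" unfolding n1_def by (rule numrad_nonneg[OF XXbd])
  have n2: "0 \<le> n2" unfolding n2_def by (rule numrad_nonneg[OF YYbd])
  have XX: "(norm (X x))\<^sup>2 \<le> n1" if "norm x = 1" for x
  proof -
    have "(norm (X x))\<^sup>2 = Re (cinner ((X \<circ> X) x) x)" by (simp add: norm_sq_Re Xs)
    also have "\<dots> \<le> cmod (cinner ((X \<circ> X) x) x)" by (rule complex_Re_le_cmod)
    also have "\<dots> \<le> n1" unfolding n1_def by (rule numrad_ge[OF XXbd that])
    finally show ?thesis .
  qed
  have YY: "(norm (Y x))\<^sup>2 \<le> n2" if "norm x = 1" for x
  proof -
    have "(norm (Y x))\<^sup>2 = Re (cinner ((Y \<circ> Y) x) x)" by (simp add: norm_sq_Re Ys)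
    also have "\<dots> \<le> cmod (cinner ((Y \<circ> Y) x) x)" by (rule complex_Re_le_cmod)
    also have "\<dots> \<le> n2" unfolding n2_def by (rule numrad_ge[OF YYbd that])
    finally show ?thesis .
  qed
  have sqmax: "sqrt (max n1 n2) = max (sqrt n1) (sqrt n2)" by (simp add: max_def)
  have plus_eq: "cinner (A (B x) + B (adj A x)) x =
      of_real (2 * Re (cinner (X x) (adj A x))) + \<i> * of_real (2 * Re (cinner (Y x) (adj A x)))" for x
  proof -
    define y where "y = adj A x"
    have "cinner (A (B x) + B (adj A x)) x = cinner (B x) y + cinner y (adj B x)"
      using aA by (simp add: cinner_add_left aBu is_adjoint_def y_def)
    also have "\<dots> = cinner (X x) y + cnj (cinner (X x) y) + \<i> * (cinner (Y x) y + cnj (cinner (Y x) y))"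
      by (simp add: BXY B'XY cinner_add_left cinner_diff_right cinner_scaleC_left cinner_scaleC_right
          cinner_commute[of y] algebra_simps)
    also have "\<dots> = of_real (2 * Re (cinner (X x) y)) + \<i> * of_real (2 * Re (cinner (Y x) y))"
      by (simp add: complex_add_cnj)
    finally show ?thesis by (simp add: y_def)
  qed
  have minus_eq: "cinner (A (B x) - B (adj A x)) x =
      of_real (- 2 * Re (cinner (Y x) (\<i> *\<^sub>C adj A x))) + \<i> * of_real (2 * Re (cinner (X x) (\<i> *\<^sub>C adj A x)))" for x
  proof -
    define y where "y = adj A x"
    have "cinner (A (B x) - B (adj A x)) x = cinner (B x) y - cinner y (adj B x)"
      using aA by (simp add: cinner_diff_left aBu is_adjoint_def y_def)
    also have "\<dots> = cinner (X x) y - cnj (cinner (X x) y) + \<i> * (cinner (Y x) y - cnj (cinner (Y x) y))"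
      by (simp add: BXY B'XY cinner_add_left cinner_diff_right cinner_scaleC_left cinner_scaleC_right
          cinner_commute[of y] algebra_simps)
    also have "\<dots> = of_real (- 2 * Re (cinner (Y x) (\<i> *\<^sub>C y))) + \<i> * of_real (2 * Re (cinner (X x) (\<i> *\<^sub>C y)))"
      by (simp add: cinner_scaleC_right complex_eq_iff)
    finally show ?thesis by (simp add: y_def)
  qed
  have part1: "numrad (\<lambda>x. A (B x) + B (adj A x)) \<le> 2 * onorm A * max (sqrt n1) (sqrt n2)
     \<and> numrad (\<lambda>x. A (B x) - B (adj A x)) \<le> 2 * onorm A * max (sqrt n1) (sqrt n2)"
    if ac: "\<forall>x. X (Y x) + Y (X x) = 0"
  proof -
    have orth: "Re (cinner (X x) (Y x)) = 0" for x
    proof -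
      have "cinner (X x) (Y x) = cinner (Y (X x)) x" by (simp add: Ys)
      also have "\<dots> = - cinner (X (Y x)) x" using ac
        by (metis add_eq_0_iff cinner_minus_left)
      also have "\<dots> = - cnj (cinner (X x) (Y x))" by (metis Xs cinner_commute)
      finally show ?thesis by (simp add: complex_eq_iff)
    qed
    define M where "M = max n1 n2"
    have K: "(Re (cinner (X x) y))\<^sup>2 + (Re (cinner (Y x) y))\<^sup>2 \<le> M * (norm y)\<^sup>2"
      if "norm x = 1" for x y
      by (rule key[OF orth]) (use XX[OF that] YY[OF that] in \<open>auto simp: M_def\<close>)
    have fin: "2 * sqrt (s\<^sup>2 + t\<^sup>2) \<le> 2 * onorm A * max (sqrt n1) (sqrt n2)"
      if "s\<^sup>2 + t\<^sup>2 \<le> M * (norm y)\<^sup>2" "norm y \<le> onorm A" for s t y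
    proof -
      have "sqrt (s\<^sup>2 + t\<^sup>2) \<le> sqrt (M * (norm y)\<^sup>2)" using that(1) by (rule real_sqrt_le_mono)
      also have "\<dots> = sqrt M * norm y" by (simp add: real_sqrt_mult)
      also have "\<dots> \<le> sqrt M * onorm A" by (rule mult_left_mono[OF that(2)]) (simp add: M_def n1 le_max_iff_disj)
      finally show ?thesis by (simp add: M_def sqmax algebra_simps)
    qed
    have ybd: "norm (adj A x) \<le> onorm A" "norm (\<i> *\<^sub>C adj A x) \<le> onorm A" if "norm x = 1" for x
      using A'bd[of x] that by (auto simp: norm_scaleC)
    have r0: "0 \<le> 2 * onorm A * max (sqrt n1) (sqrt n2)" using oA n1 by (simp add: le_max_iff_disj)
    show ?thesis
    proof
      show "numrad (\<lambda>x. A (B x) + B (adj A x)) \<le> 2 * onorm A * max (sqrt n1) (sqrt n2)"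
      proof (rule numrad_le[OF r0])
        fix x :: 'a assume x: "norm x = 1"
        have "cmod (cinner (A (B x) + B (adj A x)) x) =
          2 * sqrt ((Re (cinner (X x) (adj A x)))\<^sup>2 + (Re (cinner (Y x) (adj A x)))\<^sup>2)"
          unfolding plus_eq cmod_re_im by (simp add: power_mult_distrib sqrt4)
        also have "\<dots> \<le> 2 * onorm A * max (sqrt n1) (sqrt n2)"
          by (rule fin[OF K[OF x] ybd(1)[OF x]])
        finally show "cmod (cinner (A (B x) + B (adj A x)) x) \<le> 2 * onorm A * max (sqrt n1) (sqrt n2)" .
      qed
      show "numrad (\<lambda>x. A (B x) - B (adj A x)) \<le> 2 * onorm A * max (sqrt n1) (sqrt n2)"
      proof (rule numrad_le[OF r0])
        fix x :: 'a assume x: "norm x = 1"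
        have "cmod (cinner (A (B x) - B (adj A x)) x) =
          2 * sqrt ((Re (cinner (X x) (\<i> *\<^sub>C adj A x)))\<^sup>2 + (Re (cinner (Y x) (\<i> *\<^sub>C adj A x)))\<^sup>2)"
          unfolding minus_eq cmod_re_im by (simp add: power_mult_distrib sqrt4 add.commute)
        also have "\<dots> \<le> 2 * onorm A * max (sqrt n1) (sqrt n2)"
          by (rule fin[OF K[OF x] ybd(2)[OF x]])
        finally show "cmod (cinner (A (B x) - B (adj A x)) x) \<le> 2 * onorm A * max (sqrt n1) (sqrt n2)" .
      qed
    qed
  qed
  have part2: "numrad (\<lambda>x. A (B x) + B (adj A x)) \<le> 2 * onorm A * sqrt n1
          \<and> numrad (\<lambda>x. A (B x) - B (adj A x)) \<le> 2 * onorm A * sqrt n1"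
    if sa: "adj B = B"
  proof -
    have Y0: "Y x = 0" for x by (simp add: Y_def sa)
    have "insert 0 {cmod (cinner ((Y \<circ> Y) x) x) |x. norm x = 1} = {0::real}"
      by (auto simp: Y0)
    then have "n2 = 0" unfolding n2_def numrad_def by (metis cSup_singleton)
    moreover have "\<forall>x. X (Y x) + Y (X x) = 0" using Xbd[of 0] by (simp add: Y0)
    ultimately show ?thesis using part1 n1 by (metis max_absorb1 real_sqrt_ge_zero real_sqrt_zero)
  qed
  have part3: "numrad (A \<circ> B) \<le> onorm A * sqrt n1" if sa: "adj B = B"
  proof (rule numrad_le)
    show "0 \<le> onorm A * sqrt n1" using oA n1 by simp
    fix x :: 'a assume x: "norm x = 1"
    have XB: "X x = B x"
    proof -
      have "X x = (1/2) *\<^sub>C B x + (1/2) *\<^sub>C B x" by (simp add: X_def sa scaleC_add_right)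
      also have "\<dots> = (1/2 + 1/2) *\<^sub>C B x" by (simp only: scaleC_add_left)
      finally show ?thesis by (simp add: scaleC_one)
    qed
    have "cmod (cinner ((A \<circ> B) x) x) = cmod (cinner (B x) (adj A x))"
      using aA by (simp add: is_adjoint_def)
    also have "\<dots> \<le> norm (B x) * norm (adj A x)" by (rule cauchy_schwarz)
    also have "\<dots> \<le> sqrt n1 * onorm A"
    proof (rule mult_mono)
      show "norm (B x) \<le> sqrt n1" using XX[OF x] XB by (simp add: real_le_rsqrt)
      show "norm (adj A x) \<le> onorm A" using A'bd[of x] x by simp
    qed (use n1 in auto)
    finally show "cmod (cinner ((A \<circ> B) x) x) \<le> onorm A * sqrt n1" by (simp add: mult.commute)
  qed
  show ?thesis using part1 part2 part3 by (simp add: n1_def n2_def)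
qed

end
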